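(* Let $T$ be the semi-infinite matrix $T_{jk}=\binom{j+k}{j}$, $j,k\in\mathbb N$. Let $J$ and $\widetilde J$ be the semi-infinite symmetric tridiagonal matrices with diagonal entries $J_{nn}=b_n$, $\widetilde J_{nn}=\beta_n$ and off-diagonal entries $J_{n-1,n}=J_{n,n-1}=a_n$, $\widetilde J_{n-1,n}=\widetilde J_{n,n-1}=\alpha_n$ ($n\ge1$), all other entries zero, where $$a_n=n,\quad b_n=-n,\quad \alpha_n=n^3,\quad \beta_n=-2n^3-3n^2-2n.$$ Then $TJ=JT$ and $T\widetilde J=\widetilde JT$.
   Context: Matrix indices start at $0$; products of a semi-infinite band matrix with $T$ are finite sums entrywise. *)

theory Defs
  imports Main
begin

type_synonym imat = "nat \<Rightarrow> nat \<Rightarrow> int"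

text \<open>Product of semi-infinite matrices, defined entrywise as the sum over the
  (finite, when one factor is banded) set of indices where the summand is nonzero.\<close>
definition mmult :: "imat \<Rightarrow> imat \<Rightarrow> imat" where
  "mmult A B = (\<lambda>j k. \<Sum>l | A j l * B l k \<noteq> 0. A j l * B l k)"

definition Tmat :: imat where
  "Tmat j k = int ((j + k) choose j)"

definition tridiag :: "(nat \<Rightarrow> int) \<Rightarrow> (nat \<Rightarrow> int) \<Rightarrow> imat" where
  "tridiag d off = (\<lambda>j k. if j = k then d j
      else if k = j + 1 then off k
      else if j = k + 1 then off j
      else 0)"

definition Jmat :: imat where
  "Jmat = tridiag (\<lambda>n. - int n) (\<lambda>n. int n)"

definition Jtilde :: imat where
  "Jtilde = tridiag (\<lambda>n. - 2 * int n ^ 3 - 3 * int n ^ 2 - 2 * int n) (\<lambda>n. int n ^ 3)"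

end

theory Submission
  imports Defs
begin
lemma F1: "Suc k * (j + Suc k choose j) = Suc (j+k) * (j+k choose j)"
proof -
  have a: "(j + Suc k choose j) = (Suc (j+k) choose Suc k)"
    using binomial_symmetric[of j "j + Suc k"] by simp
  have b: "(j + k choose j) = (j+k choose k)"
    using binomial_symmetric[of j "j + k"] by simp
  show ?thesis unfolding a b using Suc_times_binomial_eq[of "j+k" k] by simp
qed
lemma F2: "Suc j * (Suc j + k choose Suc j) = Suc (j+k) * (j+k choose j)"
  using Suc_times_binomial_eq[of "j+k" j] by simp
lemma aux: "(a::nat)*X = b*Z \<Longrightarrow> a*b*Z = a*a*X" by (simp add: mult.assoc)
lemma F3: "k * (j+k) * (j + (k-1) choose j) = k * k * (j+k choose j)"
proof (cases k)
  case (Suc m)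
  have "Suc m * Suc (j+m) * (j+m choose j) = Suc m * Suc m * (j + Suc m choose j)"
    by (rule aux) (rule F1)
  then show ?thesis using Suc by simp
qed simp
lemma F4: "j * (j+k) * ((j-1) + k choose (j-1)) = j * j * (j+k choose j)"
proof (cases j)
  case (Suc m)
  have "Suc m * Suc (m+k) * (m+k choose m) = Suc m * Suc m * (Suc m + k choose Suc m)"
    by (rule aux) (rule F2)
  then show ?thesis using Suc by simp
qed simp
lemma mmult_eq: "finite S \<Longrightarrow> (\<And>l. A j l * B l k \<noteq> 0 \<Longrightarrow> l \<in> S) \<Longrightarrow>
   mmult A B j k = (\<Sum>l\<in>S. A j l * B l k)"
  unfolding mmult_def by (rule sum.mono_neutral_left) auto

lemma mmult_right:
  assumes "off 0 = 0"
  shows "mmult A (tridiag d off) j k = A j k * d k + A j (Suc k) * off (Suc k) + A j (k-1) * off k"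
proof (cases k)
  case 0
  have "mmult A (tridiag d off) j k = (\<Sum>l\<in>{0,1}. A j l * tridiag d off l k)"
    by (rule mmult_eq) (auto simp: tridiag_def 0 split: if_splits)
  then show ?thesis using assms 0 by (simp add: tridiag_def)
next
  case (Suc m)
  have "mmult A (tridiag d off) j k = (\<Sum>l\<in>{m, Suc m, Suc (Suc m)}. A j l * tridiag d off l k)"
    by (rule mmult_eq) (auto simp: tridiag_def Suc split: if_splits)
  then show ?thesis using assms Suc by (simp add: tridiag_def algebra_simps)
qed

lemma mmult_left:
  assumes "off 0 = 0"
  shows "mmult (tridiag d off) A j k = d j * A j k + off (Suc j) * A (Suc j) k + off j * A (j-1) k"
proof (cases j)
  case 0
  have "mmult (tridiag d off) A j k = (\<Sum>l\<in>{0,1}. tridiag d off j l * A l k)"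
    by (rule mmult_eq) (auto simp: tridiag_def 0 split: if_splits)
  then show ?thesis using assms 0 by (simp add: tridiag_def)
next
  case (Suc m)
  have "mmult (tridiag d off) A j k = (\<Sum>l\<in>{m, Suc m, Suc (Suc m)}. tridiag d off j l * A l k)"
    by (rule mmult_eq) (auto simp: tridiag_def Suc split: if_splits)
  then show ?thesis using assms Suc by (simp add: tridiag_def algebra_simps)
qed
lemma alg:
  fixes j k C X Y Z W :: int
  assumes hX: "(k+1)*X = (j+k+1)*C" and hY: "(j+1)*Y = (j+k+1)*C"
    and hZ: "k*(j+k)*Z = k*k*C" and hW: "j*(j+k)*W = j*j*C" and N: "j+k \<noteq> 0"
  shows "C*(-k) + X*(k+1) + Z*k = (-j)*C + (j+1)*Y + j*W"
    and "C*(-2*k^3-3*k^2-2*k) + X*(k+1)^3 + Z*k^3 = (-2*j^3-3*j^2-2*j)*C + (j+1)^3*Y + j^3*W"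
proof -
  have e1: "(j+k)*(C*(-k) + X*(k+1) + Z*k) = (j+k)*((-j)*C + (j+1)*Y + j*W)"
  proof -
    have "(j+k)*(C*(-k) + X*(k+1) + Z*k) = (j+k)*C*(-k) + (j+k)*((k+1)*X) + k*(j+k)*Z"
      by (simp add: algebra_simps)
    also have "\<dots> = (j+k)*C*(-k) + (j+k)*((j+k+1)*C) + k*k*C" by (simp only: hX hZ)
    also have "\<dots> = (j+k)*C*(-j) + (j+k)*((j+k+1)*C) + j*j*C" by (simp add: algebra_simps power2_eq_square)
    also have "\<dots> = (j+k)*C*(-j) + (j+k)*((j+1)*Y) + j*(j+k)*W" by (simp only: hY hW)
    also have "\<dots> = (j+k)*((-j)*C + (j+1)*Y + j*W)" by (simp add: algebra_simps)
    finally show ?thesis .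
  qed
  then show "C*(-k) + X*(k+1) + Z*k = (-j)*C + (j+1)*Y + j*W" using N by simp
  have e2: "(j+k)*(C*(-2*k^3-3*k^2-2*k) + X*(k+1)^3 + Z*k^3) = (j+k)*((-2*j^3-3*j^2-2*j)*C + (j+1)^3*Y + j^3*W)"
  proof -
    have "(j+k)*(C*(-2*k^3-3*k^2-2*k) + X*(k+1)^3 + Z*k^3) = (j+k)*C*(-2*k^3-3*k^2-2*k) + (j+k)*(k+1)^2*((k+1)*X) + k*k*(k*(j+k)*Z)"
      by (simp add: algebra_simps power2_eq_square power3_eq_cube)
    also have "\<dots> = (j+k)*C*(-2*k^3-3*k^2-2*k) + (j+k)*(k+1)^2*((j+k+1)*C) + k*k*(k*k*C)" by (simp only: hX hZ)
    also have "\<dots> = (j+k)*C*(-2*j^3-3*j^2-2*j) + (j+k)*(j+1)^2*((j+k+1)*C) + j*j*(j*j*C)" by (simp add: algebra_simps power2_eq_square power3_eq_cube)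
    also have "\<dots> = (j+k)*C*(-2*j^3-3*j^2-2*j) + (j+k)*(j+1)^2*((j+1)*Y) + j*j*(j*(j+k)*W)" by (simp only: hY hW)
    also have "\<dots> = (j+k)*((-2*j^3-3*j^2-2*j)*C + (j+1)^3*Y + j^3*W)" by (simp add: algebra_simps power2_eq_square power3_eq_cube)
    finally show ?thesis .
  qed
  then show "C*(-2*k^3-3*k^2-2*k) + X*(k+1)^3 + Z*k^3 = (-2*j^3-3*j^2-2*j)*C + (j+1)^3*Y + j^3*W" using N by simp
qed

theorem theorem3p1:
  shows "mmult Tmat Jmat = mmult Jmat Tmat \<and> mmult Tmat Jtilde = mmult Jtilde Tmat"
proof -
  have both: "mmult Tmat Jmat j k = mmult Jmat Tmat j k \<and> mmult Tmat Jtilde j k = mmult Jtilde Tmat j k" for j k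
  proof (cases "j + k = 0")
    case True
    then have "j = 0" "k = 0" by auto
    then show ?thesis
      unfolding Jmat_def Jtilde_def
      by (simp add: mmult_right mmult_left Tmat_def)
  next
    case False
    define C where "C = Tmat j k"
    define X where "X = Tmat j (Suc k)"
    define Y where "Y = Tmat (Suc j) k"
    define Z where "Z = Tmat j (k-1)"
    define W where "W = Tmat (j-1) k"
    have hX: "(int k+1)*X = (int j+int k+1)*C"
      using arg_cong[OF F1[of k j], of int] unfolding X_def C_def Tmat_def by (simp add: algebra_simps)
    have hY: "(int j+1)*Y = (int j+int k+1)*C"
      using arg_cong[OF F2[of j k], of int] unfolding Y_def C_def Tmat_def by (simp add: algebra_simps)
    have hZ: "int k*(int j+int k)*Z = int k*int k*C"
      using arg_cong[OF F3[of k j], of int] unfolding Z_def C_def Tmat_def by (simp add: algebra_simps)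
    have hW: "int j*(int j+int k)*W = int j*int j*C"
      using arg_cong[OF F4[of j k], of int] unfolding W_def C_def Tmat_def by (simp add: algebra_simps)
    have N: "int j + int k \<noteq> 0" using False by linarith
    note A = alg[OF hX hY hZ hW N]
    show ?thesis
      unfolding Jmat_def Jtilde_def
      using A unfolding C_def X_def Y_def Z_def W_def
      by (simp add: mmult_right mmult_left algebra_simps)
  qed
  show ?thesis using both by (auto simp: fun_eq_iff)
qed

end
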